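(* Let $(\mathbb{E},\dot 1,\dot\times)$ with $L\dashv p$ be a weakly closed monoidal refinement of a symmetric monoidal closed category $(\mathbb{B},I,\otimes,\multimap)$ in which the monoidal structure of $\mathbb{E}$ is cartesian (finite products $\dot 1,\dot\times$), let $\mathcal{T}$ be a $\otimes$-strong monad on $\mathbb{B}$ and $(M,\le,1,\cdot)$ a preordered monoid. Then $\mathbf{Asign}_{\dot\times}(\mathcal{T},M)=\mathbf{Comp}(\mathcal{T},M)$: a monotone map $\Delta:(M,\le)\to\mathbf{Ord}(p,T)$ is an $M$-graded $\dot\times$-parameterized assignment of $\mathbb{E}$ on $\mathcal{T}$ if and only if it is an $M$-graded sequentially composable family of $\mathbb{E}$-objects above $\mathcal{T}$.
   Context: A weakly closed monoidal refinement of the SMCC $(\mathbb{B},I,\otimes,\multimap)$ (evaluation $ev$) is a symmetric monoidal category $(\mathbb{E},\dot I,\dot\otimes)$ — here the cartesian one $(\dot1,\dot\times)$ — with an adjunction $L\dashv p$, $p:\mathbb{E}\to\mathbb{B}$, such that (a) $p$ is strict symmetric monoidal and faithful; (b) the unit of the adjunction is the identity; (c) for each $X\in\mathbb{B}$, $-\dot\times LX$ has a right adjoint $X\dot\pitchfork-$; (d) $(p,p)$ is a map of adjunctions from $(-\dot\times LX\dashv X\dot\pitchfork-)$ to $(-\otimes X\dashv X\multimap-)$. For $X,Y\in\mathbb{E}$ and $f\in\mathbb{B}(pX,pY)$, $f:X\dot\to Y$ means $f=p\dot f$ for some $\dot f\in\mathbb{E}(X,Y)$. Since $p$ is a right adjoint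 and strict monoidal, $p(Z\dot\times W)=pZ\otimes pW$ is a product in $\mathbb{B}$, and $\langle\mathrm{id}_{pZ},f\rangle$ denotes pairing into it. $\mathcal{T}=(T,\eta,(-)^\dagger)$ is a monad on $\mathbb{B}$ with strength $\sigma$; $f^\ddagger=f^\dagger\circ\sigma$ for $f:X\otimes Y\to TZ$; $\mathrm{kl}_{X,Y}=(ev_{X,TY})^\ddagger$. $\mathbf{Ord}(p,T)$ is the class of maps $G:|\mathbb{B}|\to|\mathbb{E}|$ with $pGX=TX$, preordered by $G\le G'$ iff $\mathrm{id}_{TX}:GX\dot\to G'X$ for all $X$. $\mathbf{Asign}_{\dot\times}(\mathcal{T},M)$: monotone $\Delta:(M,\le)\to\mathbf{Ord}(p,T)$ such that $\mathrm{kl}_{X,Y}:(X\dot\pitchfork\Delta\alpha Y)\dot\times\Delta\beta X\dot\to\Delta(\beta\cdot\alpha)Y$ for all $\alpha,\beta,X,Y$. $\mathbf{Comp}(\mathcal{T},M)$: monotone $\Delta:(M,\le)\to\mathbf{Ord}(p,T)$ such that for all $\alpha,\beta\in M$, $Z\in\mathbb{E}$, $X,Y\in\mathbb{B}$, and $\mathbb{B}$-morphisms $f:pZ\to TX$, $g:pZ\otimes X\to TY$ with $f:Z\dot\to\Delta\alpha X$ and $g:Z\dot\times LX\dot\to\Delta\beta Y$, we have $g^\ddagger\circ\langle\mathrm{id}_{pZ},f\rangle:Z\dot\to\Delta(\alpha\cdot\beta)Y$. Both are subclasses of the class of monotone maps $(M,\le)\to\mathbf{Ord}(p,T)$. *)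

theory Defs
  imports Main
begin

record ('o,'m) cat =
  c_arr :: "'m set"
  c_dom :: "'m \<Rightarrow> 'o"
  c_cod :: "'m \<Rightarrow> 'o"
  c_cmp :: "'m \<Rightarrow> 'm \<Rightarrow> 'm"   (* c_cmp C g f = g \<circ> f *)
  c_id  :: "'o \<Rightarrow> 'm"

definition hom :: "('o,'m,'x) cat_scheme \<Rightarrow> 'o \<Rightarrow> 'o \<Rightarrow> 'm set" where
  "hom C X Y = {f \<in> c_arr C. c_dom C f = X \<and> c_cod C f = Y}"

definition category :: "('o,'m,'x) cat_scheme \<Rightarrow> bool" where
  "category C \<longleftrightarrow>
     (\<forall>X. c_id C X \<in> hom C X X) \<and>
     (\<forall>f g. f \<in> c_arr C \<longrightarrow> g \<in> c_arr C \<longrightarrow> c_cod C f = c_dom C g \<longrightarrow>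
        c_cmp C g f \<in> hom C (c_dom C f) (c_cod C g)) \<and>
     (\<forall>f. f \<in> c_arr C \<longrightarrow> c_cmp C (c_id C (c_cod C f)) f = f \<and> c_cmp C f (c_id C (c_dom C f)) = f) \<and>
     (\<forall>f g h. f \<in> c_arr C \<longrightarrow> g \<in> c_arr C \<longrightarrow> h \<in> c_arr C \<longrightarrow>
        c_cod C f = c_dom C g \<longrightarrow> c_cod C g = c_dom C h \<longrightarrow>
        c_cmp C h (c_cmp C g f) = c_cmp C (c_cmp C h g) f)"

definition iso :: "('o,'m,'x) cat_scheme \<Rightarrow> 'o \<Rightarrow> 'o \<Rightarrow> 'm \<Rightarrow> bool" where
  "iso C X Y f \<longleftrightarrow> f \<in> hom C X Y \<and>
     (\<exists>g \<in> hom C Y X. c_cmp C g f = c_id C X \<and> c_cmp C f g = c_id C Y)"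

record ('o,'m) smcc = "('o,'m) cat" +
  m_unit  :: 'o
  m_tens  :: "'o \<Rightarrow> 'o \<Rightarrow> 'o"
  m_tensm :: "'m \<Rightarrow> 'm \<Rightarrow> 'm"
  m_assoc :: "'o \<Rightarrow> 'o \<Rightarrow> 'o \<Rightarrow> 'm"
  m_lunit :: "'o \<Rightarrow> 'm"
  m_runit :: "'o \<Rightarrow> 'm"
  m_sym   :: "'o \<Rightarrow> 'o \<Rightarrow> 'm"
  m_lolli :: "'o \<Rightarrow> 'o \<Rightarrow> 'o"
  m_ev    :: "'o \<Rightarrow> 'o \<Rightarrow> 'm"

definition is_smcc :: "('o,'m,'x) smcc_scheme \<Rightarrow> bool" where
  "is_smcc B \<longleftrightarrow> category B \<and>
   \<comment> \<open>tensor is a bifunctor\<close>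
   (\<forall>f g. f \<in> c_arr B \<longrightarrow> g \<in> c_arr B \<longrightarrow>
      m_tensm B f g \<in> hom B (m_tens B (c_dom B f) (c_dom B g)) (m_tens B (c_cod B f) (c_cod B g))) \<and>
   (\<forall>X Y. m_tensm B (c_id B X) (c_id B Y) = c_id B (m_tens B X Y)) \<and>
   (\<forall>f g f' g'. f \<in> c_arr B \<longrightarrow> g \<in> c_arr B \<longrightarrow> f' \<in> c_arr B \<longrightarrow> g' \<in> c_arr B \<longrightarrow>
      c_cod B f = c_dom B g \<longrightarrow> c_cod B f' = c_dom B g' \<longrightarrow>
      m_tensm B (c_cmp B g f) (c_cmp B g' f') = c_cmp B (m_tensm B g g') (m_tensm B f f')) \<and>
   \<comment> \<open>structural isomorphisms\<close>
   (\<forall>X Y Z. iso B (m_tens B (m_tens B X Y) Z) (m_tens B X (m_tens B Y Z)) (m_assoc B X Y Z)) \<and>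
   (\<forall>X. iso B (m_tens B (m_unit B) X) X (m_lunit B X)) \<and>
   (\<forall>X. iso B (m_tens B X (m_unit B)) X (m_runit B X)) \<and>
   (\<forall>X Y. iso B (m_tens B X Y) (m_tens B Y X) (m_sym B X Y)) \<and>
   \<comment> \<open>naturality\<close>
   (\<forall>f g h. f \<in> c_arr B \<longrightarrow> g \<in> c_arr B \<longrightarrow> h \<in> c_arr B \<longrightarrow>
      c_cmp B (m_assoc B (c_cod B f) (c_cod B g) (c_cod B h)) (m_tensm B (m_tensm B f g) h) =
      c_cmp B (m_tensm B f (m_tensm B g h)) (m_assoc B (c_dom B f) (c_dom B g) (c_dom B h))) \<and>
   (\<forall>f. f \<in> c_arr B \<longrightarrow>
      c_cmp B (m_lunit B (c_cod B f)) (m_tensm B (c_id B (m_unit B)) f) = c_cmp B f (m_lunit B (c_dom B f))) \<and>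
   (\<forall>f. f \<in> c_arr B \<longrightarrow>
      c_cmp B (m_runit B (c_cod B f)) (m_tensm B f (c_id B (m_unit B))) = c_cmp B f (m_runit B (c_dom B f))) \<and>
   (\<forall>f g. f \<in> c_arr B \<longrightarrow> g \<in> c_arr B \<longrightarrow>
      c_cmp B (m_sym B (c_cod B f) (c_cod B g)) (m_tensm B f g) =
      c_cmp B (m_tensm B g f) (m_sym B (c_dom B f) (c_dom B g))) \<and>
   \<comment> \<open>pentagon\<close>
   (\<forall>W X Y Z.
      c_cmp B (m_assoc B W X (m_tens B Y Z)) (m_assoc B (m_tens B W X) Y Z) =
      c_cmp B (m_tensm B (c_id B W) (m_assoc B X Y Z))
        (c_cmp B (m_assoc B W (m_tens B X Y) Z) (m_tensm B (m_assoc B W X Y) (c_id B Z)))) \<and>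
   \<comment> \<open>triangle\<close>
   (\<forall>X Y. c_cmp B (m_tensm B (c_id B X) (m_lunit B Y)) (m_assoc B X (m_unit B) Y) =
          m_tensm B (m_runit B X) (c_id B Y)) \<and>
   \<comment> \<open>symmetry and hexagon\<close>
   (\<forall>X Y. c_cmp B (m_sym B Y X) (m_sym B X Y) = c_id B (m_tens B X Y)) \<and>
   (\<forall>X Y Z.
      c_cmp B (m_assoc B Y Z X) (c_cmp B (m_sym B X (m_tens B Y Z)) (m_assoc B X Y Z)) =
      c_cmp B (m_tensm B (c_id B Y) (m_sym B X Z))
        (c_cmp B (m_assoc B Y X Z) (m_tensm B (m_sym B X Y) (c_id B Z)))) \<and>
   \<comment> \<open>closedness: - \<otimes> X \<stileturn> X \<multimap> -, with counit ev\<close>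
   (\<forall>X Y. m_ev B X Y \<in> hom B (m_tens B (m_lolli B X Y) X) Y) \<and>
   (\<forall>X Y Z f. f \<in> hom B (m_tens B Z X) Y \<longrightarrow>
      (\<exists>!h. h \<in> hom B Z (m_lolli B X Y) \<and> c_cmp B (m_ev B X Y) (m_tensm B h (c_id B X)) = f))"

section \<open>Strong monads on \<open>\<bbbB>\<close> (Kleisli triple presentation)\<close>

record ('o,'m) smonad =
  t_ob  :: "'o \<Rightarrow> 'o"
  t_eta :: "'o \<Rightarrow> 'm"
  t_ext :: "'m \<Rightarrow> 'm"
  t_str :: "'o \<Rightarrow> 'o \<Rightarrow> 'm"

definition t_map :: "('o,'m,'x) smcc_scheme \<Rightarrow> ('o,'m) smonad \<Rightarrow> 'm \<Rightarrow> 'm" where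
  "t_map B T f = t_ext T (c_cmp B (t_eta T (c_cod B f)) f)"

definition strong_monad :: "('o,'m,'x) smcc_scheme \<Rightarrow> ('o,'m) smonad \<Rightarrow> bool" where
  "strong_monad B T \<longleftrightarrow>
   (\<forall>X. t_eta T X \<in> hom B X (t_ob T X)) \<and>
   (\<forall>X Y f. f \<in> hom B X (t_ob T Y) \<longrightarrow> t_ext T f \<in> hom B (t_ob T X) (t_ob T Y)) \<and>
   (\<forall>X. t_ext T (t_eta T X) = c_id B (t_ob T X)) \<and>
   (\<forall>X Y f. f \<in> hom B X (t_ob T Y) \<longrightarrow> c_cmp B (t_ext T f) (t_eta T X) = f) \<and>
   (\<forall>X Y Z f g. f \<in> hom B X (t_ob T Y) \<longrightarrow> g \<in> hom B Y (t_ob T Z) \<longrightarrow>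
      c_cmp B (t_ext T g) (t_ext T f) = t_ext T (c_cmp B (t_ext T g) f)) \<and>
   \<comment> \<open>strength\<close>
   (\<forall>X Y. t_str T X Y \<in> hom B (m_tens B X (t_ob T Y)) (t_ob T (m_tens B X Y))) \<and>
   (\<forall>f g. f \<in> c_arr B \<longrightarrow> g \<in> c_arr B \<longrightarrow>
      c_cmp B (t_str T (c_cod B f) (c_cod B g)) (m_tensm B f (t_map B T g)) =
      c_cmp B (t_map B T (m_tensm B f g)) (t_str T (c_dom B f) (c_dom B g))) \<and>
   (\<forall>Y. c_cmp B (t_map B T (m_lunit B Y)) (t_str T (m_unit B) Y) = m_lunit B (t_ob T Y)) \<and>
   (\<forall>X Y Z. c_cmp B (t_map B T (m_assoc B X Y Z)) (t_str T (m_tens B X Y) Z) =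
      c_cmp B (t_str T X (m_tens B Y Z))
        (c_cmp B (m_tensm B (c_id B X) (t_str T Y Z)) (m_assoc B X Y (t_ob T Z)))) \<and>
   (\<forall>X Y. c_cmp B (t_str T X Y) (m_tensm B (c_id B X) (t_eta T Y)) = t_eta T (m_tens B X Y)) \<and>
   (\<forall>X Y Z f. f \<in> hom B Y (t_ob T Z) \<longrightarrow>
      c_cmp B (t_str T X Z) (m_tensm B (c_id B X) (t_ext T f)) =
      c_cmp B (t_ext T (c_cmp B (t_str T X Z) (m_tensm B (c_id B X) f))) (t_str T X Y))"

definition ddag :: "('o,'m,'x) smcc_scheme \<Rightarrow> ('o,'m) smonad \<Rightarrow> 'o \<Rightarrow> 'o \<Rightarrow> 'm \<Rightarrow> 'm" where
  "ddag B T X Y f = c_cmp B (t_ext T f) (t_str T X Y)"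

definition kl :: "('o,'m,'x) smcc_scheme \<Rightarrow> ('o,'m) smonad \<Rightarrow> 'o \<Rightarrow> 'o \<Rightarrow> 'm" where
  "kl B T X Y = ddag B T (m_lolli B X (t_ob T Y)) X (m_ev B X (t_ob T Y))"

section \<open>Cartesian categories (the monoidal structure of \<open>\<bbbE>\<close>)\<close>

record ('o,'m) ccat = "('o,'m) cat" +
  k_one  :: 'o
  k_prod :: "'o \<Rightarrow> 'o \<Rightarrow> 'o"
  k_fst  :: "'o \<Rightarrow> 'o \<Rightarrow> 'm"
  k_snd  :: "'o \<Rightarrow> 'o \<Rightarrow> 'm"

definition cartesian :: "('o,'m,'x) ccat_scheme \<Rightarrow> bool" where
  "cartesian E \<longleftrightarrow> category E \<and>
   (\<forall>A. \<exists>!h. h \<in> hom E A (k_one E)) \<and>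
   (\<forall>A C. k_fst E A C \<in> hom E (k_prod E A C) A \<and> k_snd E A C \<in> hom E (k_prod E A C) C) \<and>
   (\<forall>Z A C f g. f \<in> hom E Z A \<longrightarrow> g \<in> hom E Z C \<longrightarrow>
      (\<exists>!h. h \<in> hom E Z (k_prod E A C) \<and> c_cmp E (k_fst E A C) h = f \<and> c_cmp E (k_snd E A C) h = g))"

definition kpair :: "('o,'m,'x) ccat_scheme \<Rightarrow> 'm \<Rightarrow> 'm \<Rightarrow> 'm" where
  "kpair E f g = (THE h. h \<in> hom E (c_dom E f) (k_prod E (c_cod E f) (c_cod E g)) \<and>
      c_cmp E (k_fst E (c_cod E f) (c_cod E g)) h = f \<and> c_cmp E (k_snd E (c_cod E f) (c_cod E g)) h = g)"

definition kprodm :: "('o,'m,'x) ccat_scheme \<Rightarrow> 'm \<Rightarrow> 'm \<Rightarrow> 'm" where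
  "kprodm E f g = kpair E (c_cmp E f (k_fst E (c_dom E f) (c_dom E g)))
                          (c_cmp E g (k_snd E (c_dom E f) (c_dom E g)))"

definition kassoc :: "('o,'m,'x) ccat_scheme \<Rightarrow> 'o \<Rightarrow> 'o \<Rightarrow> 'o \<Rightarrow> 'm" where
  "kassoc E A C D = kpair E (c_cmp E (k_fst E A C) (k_fst E (k_prod E A C) D))
      (kpair E (c_cmp E (k_snd E A C) (k_fst E (k_prod E A C) D)) (k_snd E (k_prod E A C) D))"

definition klunit :: "('o,'m,'x) ccat_scheme \<Rightarrow> 'o \<Rightarrow> 'm" where
  "klunit E A = k_snd E (k_one E) A"

definition krunit :: "('o,'m,'x) ccat_scheme \<Rightarrow> 'o \<Rightarrow> 'm" where
  "krunit E A = k_fst E A (k_one E)"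

definition ksym :: "('o,'m,'x) ccat_scheme \<Rightarrow> 'o \<Rightarrow> 'o \<Rightarrow> 'm" where
  "ksym E A C = kpair E (k_snd E A C) (k_fst E A C)"

record ('a,'b,'c,'d) wref =
  p_ob   :: "'c \<Rightarrow> 'a"
  p_mor  :: "'d \<Rightarrow> 'b"
  l_ob   :: "'a \<Rightarrow> 'c"           (* L on objects; unit of L \<stileturn> p is the identity *)
  w_pitch :: "'a \<Rightarrow> 'c \<Rightarrow> 'c"
  w_ev   :: "'a \<Rightarrow> 'c \<Rightarrow> 'd"

definition weakly_closed_cartesian_refinement ::
  "('a,'b,'x) smcc_scheme \<Rightarrow> ('c,'d,'y) ccat_scheme \<Rightarrow> ('a,'b,'c,'d) wref \<Rightarrow> bool" where
  "weakly_closed_cartesian_refinement B E R \<longleftrightarrow> is_smcc B \<and> cartesian E \<and>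
   \<comment> \<open>p is a functor\<close>
   (\<forall>f. f \<in> c_arr E \<longrightarrow> p_mor R f \<in> hom B (p_ob R (c_dom E f)) (p_ob R (c_cod E f))) \<and>
   (\<forall>A. p_mor R (c_id E A) = c_id B (p_ob R A)) \<and>
   (\<forall>f g. f \<in> c_arr E \<longrightarrow> g \<in> c_arr E \<longrightarrow> c_cod E f = c_dom E g \<longrightarrow>
      p_mor R (c_cmp E g f) = c_cmp B (p_mor R g) (p_mor R f)) \<and>
   \<comment> \<open>(a) p strict symmetric monoidal (w.r.t. the cartesian structure of E) and faithful\<close>
   p_ob R (k_one E) = m_unit B \<and>
   (\<forall>A C. p_ob R (k_prod E A C) = m_tens B (p_ob R A) (p_ob R C)) \<and>
   (\<forall>f g. f \<in> c_arr E \<longrightarrow> g \<in> c_arr E \<longrightarrow> p_mor R (kprodm E f g) = m_tensm B (p_mor R f) (p_mor R g)) \<and>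
   (\<forall>A C D. p_mor R (kassoc E A C D) = m_assoc B (p_ob R A) (p_ob R C) (p_ob R D)) \<and>
   (\<forall>A. p_mor R (klunit E A) = m_lunit B (p_ob R A)) \<and>
   (\<forall>A. p_mor R (krunit E A) = m_runit B (p_ob R A)) \<and>
   (\<forall>A C. p_mor R (ksym E A C) = m_sym B (p_ob R A) (p_ob R C)) \<and>
   (\<forall>A C f g. f \<in> hom E A C \<longrightarrow> g \<in> hom E A C \<longrightarrow> p_mor R f = p_mor R g \<longrightarrow> f = g) \<and>
   \<comment> \<open>(b) L \<stileturn> p with identity unit\<close>
   (\<forall>X. p_ob R (l_ob R X) = X) \<and>
   (\<forall>X A f. f \<in> hom B X (p_ob R A) \<longrightarrow> (\<exists>!g. g \<in> hom E (l_ob R X) A \<and> p_mor R g = f)) \<and>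
   \<comment> \<open>(c) - \<times> LX \<stileturn> X \<pitchfork> -\<close>
   (\<forall>X A. w_ev R X A \<in> hom E (k_prod E (w_pitch R X A) (l_ob R X)) A) \<and>
   (\<forall>X A Z g. g \<in> hom E (k_prod E Z (l_ob R X)) A \<longrightarrow>
      (\<exists>!h. h \<in> hom E Z (w_pitch R X A) \<and>
            c_cmp E (w_ev R X A) (kprodm E h (c_id E (l_ob R X))) = g)) \<and>
   \<comment> \<open>(d) (p,p) is a map of adjunctions\<close>
   (\<forall>X A. p_ob R (w_pitch R X A) = m_lolli B X (p_ob R A) \<and>
          p_mor R (w_ev R X A) = m_ev B X (p_ob R A))"

definition dotarr :: "('a,'b,'c,'d) wref \<Rightarrow> ('c,'d,'y) ccat_scheme \<Rightarrow> 'b \<Rightarrow> 'c \<Rightarrow> 'c \<Rightarrow> bool" where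
  "dotarr R E f A C \<longleftrightarrow> (\<exists>h \<in> hom E A C. p_mor R h = f)"

definition bpair :: "('a,'b,'x) smcc_scheme \<Rightarrow> ('c,'d,'y) ccat_scheme \<Rightarrow> ('a,'b,'c,'d) wref \<Rightarrow>
    'c \<Rightarrow> 'c \<Rightarrow> 'b \<Rightarrow> 'b \<Rightarrow> 'b" where
  "bpair B E R Z W f g = (THE h. h \<in> hom B (c_dom B f) (p_ob R (k_prod E Z W)) \<and>
      c_cmp B (p_mor R (k_fst E Z W)) h = f \<and> c_cmp B (p_mor R (k_snd E Z W)) h = g)"

definition preordered_monoid :: "('g \<Rightarrow> 'g \<Rightarrow> bool) \<Rightarrow> 'g \<Rightarrow> ('g \<Rightarrow> 'g \<Rightarrow> 'g) \<Rightarrow> bool" where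
  "preordered_monoid le one mult \<longleftrightarrow>
    (\<forall>a. le a a) \<and> (\<forall>a b c. le a b \<longrightarrow> le b c \<longrightarrow> le a c) \<and>
    (\<forall>a b c. mult (mult a b) c = mult a (mult b c)) \<and>
    (\<forall>a. mult one a = a \<and> mult a one = a) \<and>
    (\<forall>a a' b b'. le a a' \<longrightarrow> le b b' \<longrightarrow> le (mult a b) (mult a' b'))"

definition ord_le :: "('a,'b,'x) smcc_scheme \<Rightarrow> ('c,'d,'y) ccat_scheme \<Rightarrow> ('a,'b,'c,'d) wref \<Rightarrow>
    ('a,'b) smonad \<Rightarrow> ('a \<Rightarrow> 'c) \<Rightarrow> ('a \<Rightarrow> 'c) \<Rightarrow> bool" where
  "ord_le B E R T G G' \<longleftrightarrow> (\<forall>X. dotarr R E (c_id B (t_ob T X)) (G X) (G' X))"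

definition mono_ord :: "('a,'b,'x) smcc_scheme \<Rightarrow> ('c,'d,'y) ccat_scheme \<Rightarrow> ('a,'b,'c,'d) wref \<Rightarrow>
    ('a,'b) smonad \<Rightarrow> ('g \<Rightarrow> 'g \<Rightarrow> bool) \<Rightarrow> ('g \<Rightarrow> 'a \<Rightarrow> 'c) \<Rightarrow> bool" where
  "mono_ord B E R T le \<Delta> \<longleftrightarrow>
     (\<forall>\<alpha> X. p_ob R (\<Delta> \<alpha> X) = t_ob T X) \<and>
     (\<forall>\<alpha> \<beta>. le \<alpha> \<beta> \<longrightarrow> ord_le B E R T (\<Delta> \<alpha>) (\<Delta> \<beta>))"

definition Asign :: "('a,'b,'x) smcc_scheme \<Rightarrow> ('c,'d,'y) ccat_scheme \<Rightarrow> ('a,'b,'c,'d) wref \<Rightarrow>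
    ('a,'b) smonad \<Rightarrow> ('g \<Rightarrow> 'g \<Rightarrow> bool) \<Rightarrow> ('g \<Rightarrow> 'g \<Rightarrow> 'g) \<Rightarrow> ('g \<Rightarrow> 'a \<Rightarrow> 'c) set" where
  "Asign B E R T le mult = {\<Delta>. mono_ord B E R T le \<Delta> \<and>
     (\<forall>\<alpha> \<beta> X Y. dotarr R E (kl B T X Y)
        (k_prod E (w_pitch R X (\<Delta> \<alpha> Y)) (\<Delta> \<beta> X)) (\<Delta> (mult \<beta> \<alpha>) Y))}"

definition Comp :: "('a,'b,'x) smcc_scheme \<Rightarrow> ('c,'d,'y) ccat_scheme \<Rightarrow> ('a,'b,'c,'d) wref \<Rightarrow>
    ('a,'b) smonad \<Rightarrow> ('g \<Rightarrow> 'g \<Rightarrow> bool) \<Rightarrow> ('g \<Rightarrow> 'g \<Rightarrow> 'g) \<Rightarrow> ('g \<Rightarrow> 'a \<Rightarrow> 'c) set" where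
  "Comp B E R T le mult = {\<Delta>. mono_ord B E R T le \<Delta> \<and>
     (\<forall>\<alpha> \<beta> Z X Y f g.
        f \<in> hom B (p_ob R Z) (t_ob T X) \<longrightarrow>
        g \<in> hom B (m_tens B (p_ob R Z) X) (t_ob T Y) \<longrightarrow>
        dotarr R E f Z (\<Delta> \<alpha> X) \<longrightarrow>
        dotarr R E g (k_prod E Z (l_ob R X)) (\<Delta> \<beta> Y) \<longrightarrow>
        dotarr R E (c_cmp B (ddag B T (p_ob R Z) X g) (bpair B E R Z (\<Delta> \<alpha> X) (c_id B (p_ob R Z)) f))
          Z (\<Delta> (mult \<alpha> \<beta>) Y))}"

end

theory Submission
  imports Defs
begin

lemma cat_facts:
  assumes "category C"
  shows cat_id: "c_id C X \<in> hom C X X"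
    and cat_cmp: "f \<in> hom C A D \<Longrightarrow> g \<in> hom C D F \<Longrightarrow> c_cmp C g f \<in> hom C A F"
    and cat_idl: "f \<in> hom C A D \<Longrightarrow> c_cmp C (c_id C D) f = f"
    and cat_idr: "f \<in> hom C A D \<Longrightarrow> c_cmp C f (c_id C A) = f"
    and cat_assoc: "f \<in> hom C A D \<Longrightarrow> g \<in> hom C D F \<Longrightarrow> h \<in> hom C F G \<Longrightarrow>
        c_cmp C h (c_cmp C g f) = c_cmp C (c_cmp C h g) f"
  using assms unfolding category_def hom_def by auto

context
  fixes B :: "('a,'b) smcc" and E :: "('c,'d) ccat" and R :: "('a,'b,'c,'d) wref"
    and T :: "('a,'b) smonad"
  assumes WR: "weakly_closed_cartesian_refinement B E R"
    and SM: "strong_monad B T"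
begin

lemmas W = WR[unfolded weakly_closed_cartesian_refinement_def]
lemmas WB = W[THEN conjunct1, unfolded is_smcc_def]
lemmas WE = W[THEN conjunct2, THEN conjunct1, unfolded cartesian_def]
lemmas SMU = SM[unfolded strong_monad_def]

lemma catB: "category B" using WB by (elim conjE)
lemma catE: "category E" using WE by (elim conjE)

lemma fstsnd: "\<forall>A C. k_fst E A C \<in> hom E (k_prod E A C) A \<and> k_snd E A C \<in> hom E (k_prod E A C) C"
  using WE by (elim conjE)
lemma fst_hom: "k_fst E A C \<in> hom E (k_prod E A C) A" using fstsnd by blast
lemma snd_hom: "k_snd E A C \<in> hom E (k_prod E A C) C" using fstsnd by blast

lemma pair_unique0: "\<forall>Z A C f g. f \<in> hom E Z A \<longrightarrow> g \<in> hom E Z C \<longrightarrow>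
      (\<exists>!h. h \<in> hom E Z (k_prod E A C) \<and> c_cmp E (k_fst E A C) h = f \<and> c_cmp E (k_snd E A C) h = g)"
  using WE by (elim conjE)
lemma pair_unique: "f \<in> hom E Z A \<Longrightarrow> g \<in> hom E Z C \<Longrightarrow>
      (\<exists>!h. h \<in> hom E Z (k_prod E A C) \<and> c_cmp E (k_fst E A C) h = f \<and> c_cmp E (k_snd E A C) h = g)"
  using pair_unique0 by blast


lemma p_hom0: "\<forall>f. f \<in> c_arr E \<longrightarrow> p_mor R f \<in> hom B (p_ob R (c_dom E f)) (p_ob R (c_cod E f))"
  using W by (elim conjE)
lemma p_id: "p_mor R (c_id E A) = c_id B (p_ob R A)"
proof - have "\<forall>A. p_mor R (c_id E A) = c_id B (p_ob R A)" using W by (elim conjE) then show ?thesis by blast qed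
lemma p_cmp0: "\<forall>f g. f \<in> c_arr E \<longrightarrow> g \<in> c_arr E \<longrightarrow> c_cod E f = c_dom E g \<longrightarrow>
      p_mor R (c_cmp E g f) = c_cmp B (p_mor R g) (p_mor R f)"
  using W by (elim conjE)
lemma p_prod: "p_ob R (k_prod E A C) = m_tens B (p_ob R A) (p_ob R C)"
proof - have "\<forall>A C. p_ob R (k_prod E A C) = m_tens B (p_ob R A) (p_ob R C)" using W by (elim conjE) then show ?thesis by blast qed
lemma p_kprodm0: "\<forall>f g. f \<in> c_arr E \<longrightarrow> g \<in> c_arr E \<longrightarrow> p_mor R (kprodm E f g) = m_tensm B (p_mor R f) (p_mor R g)"
  using W by (elim conjE)
lemma p_faithful0: "\<forall>A C f g. f \<in> hom E A C \<longrightarrow> g \<in> hom E A C \<longrightarrow> p_mor R f = p_mor R g \<longrightarrow> f = g"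
  using W by (elim conjE)
lemma pL: "p_ob R (l_ob R X) = X"
proof - have "\<forall>X. p_ob R (l_ob R X) = X" using W by (elim conjE) then show ?thesis by blast qed
lemma lift0: "\<forall>X A f. f \<in> hom B X (p_ob R A) \<longrightarrow> (\<exists>!g. g \<in> hom E (l_ob R X) A \<and> p_mor R g = f)"
  using W by (elim conjE)
lemma wev_hom: "w_ev R X A \<in> hom E (k_prod E (w_pitch R X A) (l_ob R X)) A"
proof - have "\<forall>X A. w_ev R X A \<in> hom E (k_prod E (w_pitch R X A) (l_ob R X)) A" using W by (elim conjE) then show ?thesis by blast qed
lemma curry0: "\<forall>X A Z g. g \<in> hom E (k_prod E Z (l_ob R X)) A \<longrightarrow>
      (\<exists>!h. h \<in> hom E Z (w_pitch R X A) \<and>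
            c_cmp E (w_ev R X A) (kprodm E h (c_id E (l_ob R X))) = g)"
  using W by (elim conjE)
lemma pitch0: "\<forall>X A. p_ob R (w_pitch R X A) = m_lolli B X (p_ob R A) \<and>
          p_mor R (w_ev R X A) = m_ev B X (p_ob R A)"
  using W by (elim conjE)

lemma p_hom: "f \<in> hom E A C \<Longrightarrow> p_mor R f \<in> hom B (p_ob R A) (p_ob R C)"
  using p_hom0 unfolding hom_def by auto
lemma p_cmp: "f \<in> hom E A C \<Longrightarrow> g \<in> hom E C D \<Longrightarrow> p_mor R (c_cmp E g f) = c_cmp B (p_mor R g) (p_mor R f)"
  using p_cmp0 unfolding hom_def by auto
lemma p_kprodm: "f \<in> hom E A A' \<Longrightarrow> g \<in> hom E C C' \<Longrightarrow> p_mor R (kprodm E f g) = m_tensm B (p_mor R f) (p_mor R g)"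
  using p_kprodm0 unfolding hom_def by auto
lemma p_faithful: "f \<in> hom E A C \<Longrightarrow> g \<in> hom E A C \<Longrightarrow> p_mor R f = p_mor R g \<Longrightarrow> f = g"
  using p_faithful0 by blast
lemma lift: "f \<in> hom B X (p_ob R A) \<Longrightarrow> \<exists>g. g \<in> hom E (l_ob R X) A \<and> p_mor R g = f"
  using lift0 by blast
lemma curry: "g \<in> hom E (k_prod E Z (l_ob R X)) A \<Longrightarrow>
   \<exists>h. h \<in> hom E Z (w_pitch R X A) \<and> c_cmp E (w_ev R X A) (kprodm E h (c_id E (l_ob R X))) = g"
  using curry0 by blast
lemma p_pitch: "p_ob R (w_pitch R X A) = m_lolli B X (p_ob R A)"
  and p_wev: "p_mor R (w_ev R X A) = m_ev B X (p_ob R A)"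
  using pitch0 by blast+

lemma tensm_hom0: "\<forall>f g. f \<in> c_arr B \<longrightarrow> g \<in> c_arr B \<longrightarrow>
      m_tensm B f g \<in> hom B (m_tens B (c_dom B f) (c_dom B g)) (m_tens B (c_cod B f) (c_cod B g))"
  using WB by (elim conjE)
lemma tensm_hom: "f \<in> hom B A A' \<Longrightarrow> g \<in> hom B C C' \<Longrightarrow> m_tensm B f g \<in> hom B (m_tens B A C) (m_tens B A' C')"
  using tensm_hom0 unfolding hom_def by auto
lemma ev_hom: "m_ev B X Y \<in> hom B (m_tens B (m_lolli B X Y) X) Y"
proof - have "\<forall>X Y. m_ev B X Y \<in> hom B (m_tens B (m_lolli B X Y) X) Y" using WB by (elim conjE) then show ?thesis by blast qed

lemma SM1: "\<forall>X. t_eta T X \<in> hom B X (t_ob T X)" using SMU by (elim conjE)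
lemma SM2: "\<forall>X Y f. f \<in> hom B X (t_ob T Y) \<longrightarrow> t_ext T f \<in> hom B (t_ob T X) (t_ob T Y)" using SMU by (elim conjE)
lemma SM3: "\<forall>X. t_ext T (t_eta T X) = c_id B (t_ob T X)" using SMU by (elim conjE)
lemma SM4: "\<forall>X Y f. f \<in> hom B X (t_ob T Y) \<longrightarrow> c_cmp B (t_ext T f) (t_eta T X) = f" using SMU by (elim conjE)
lemma SM5: "\<forall>X Y Z f g. f \<in> hom B X (t_ob T Y) \<longrightarrow> g \<in> hom B Y (t_ob T Z) \<longrightarrow>
      c_cmp B (t_ext T g) (t_ext T f) = t_ext T (c_cmp B (t_ext T g) f)" using SMU by (elim conjE)
lemma SM6: "\<forall>X Y. t_str T X Y \<in> hom B (m_tens B X (t_ob T Y)) (t_ob T (m_tens B X Y))" using SMU by (elim conjE)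
lemma SM7: "\<forall>f g. f \<in> c_arr B \<longrightarrow> g \<in> c_arr B \<longrightarrow>
      c_cmp B (t_str T (c_cod B f) (c_cod B g)) (m_tensm B f (t_map B T g)) =
      c_cmp B (t_map B T (m_tensm B f g)) (t_str T (c_dom B f) (c_dom B g))" using SMU by (elim conjE)

lemma eta_hom: "t_eta T X \<in> hom B X (t_ob T X)" using SM1 by blast
lemma ext_hom: "f \<in> hom B X (t_ob T Y) \<Longrightarrow> t_ext T f \<in> hom B (t_ob T X) (t_ob T Y)" using SM2 by blast
lemma ext_eta: "t_ext T (t_eta T X) = c_id B (t_ob T X)" using SM3 by blast
lemma ext_unit: "f \<in> hom B X (t_ob T Y) \<Longrightarrow> c_cmp B (t_ext T f) (t_eta T X) = f" using SM4 by blast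
lemma ext_comp: "f \<in> hom B X (t_ob T Y) \<Longrightarrow> g \<in> hom B Y (t_ob T Z) \<Longrightarrow>
      c_cmp B (t_ext T g) (t_ext T f) = t_ext T (c_cmp B (t_ext T g) f)" using SM5 by blast
lemma str_hom: "t_str T X Y \<in> hom B (m_tens B X (t_ob T Y)) (t_ob T (m_tens B X Y))" using SM6 by blast
lemma str_nat: "f \<in> hom B A A' \<Longrightarrow> g \<in> hom B C C' \<Longrightarrow>
      c_cmp B (t_str T A' C') (m_tensm B f (t_map B T g)) =
      c_cmp B (t_map B T (m_tensm B f g)) (t_str T A C)" using SM7 unfolding hom_def by auto


lemma kpair_prop:
  assumes "f \<in> hom E Z A" "g \<in> hom E Z C"
  shows "kpair E f g \<in> hom E Z (k_prod E A C) \<and> c_cmp E (k_fst E A C) (kpair E f g) = f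
       \<and> c_cmp E (k_snd E A C) (kpair E f g) = g"
proof -
  have d: "c_dom E f = Z" "c_cod E f = A" "c_cod E g = C" using assms unfolding hom_def by auto
  show ?thesis unfolding kpair_def d by (rule theI'[OF pair_unique[OF assms]])
qed

lemma kpair_eq:
  assumes "h1 \<in> hom E Z (k_prod E A C)" "h2 \<in> hom E Z (k_prod E A C)"
    "c_cmp E (k_fst E A C) h1 = c_cmp E (k_fst E A C) h2"
    "c_cmp E (k_snd E A C) h1 = c_cmp E (k_snd E A C) h2"
  shows "h1 = h2"
proof -
  have a: "c_cmp E (k_fst E A C) h1 \<in> hom E Z A" "c_cmp E (k_snd E A C) h1 \<in> hom E Z C"
    using cat_cmp[OF catE assms(1) fst_hom] cat_cmp[OF catE assms(1) snd_hom] by auto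
  obtain h where U: "\<forall>y. y \<in> hom E Z (k_prod E A C) \<and> c_cmp E (k_fst E A C) y = c_cmp E (k_fst E A C) h1
      \<and> c_cmp E (k_snd E A C) y = c_cmp E (k_snd E A C) h1 \<longrightarrow> y = h"
    using pair_unique[OF a] by (elim ex1E) blast
  have "h1 = h" by (rule U[rule_format]) (simp_all add: assms)
  moreover have "h2 = h" by (rule U[rule_format]) (simp_all add: assms)
  ultimately show ?thesis by simp
qed

lemma kprodm_prop:
  assumes "f \<in> hom E A A'" "g \<in> hom E C C'"
  shows "kprodm E f g \<in> hom E (k_prod E A C) (k_prod E A' C')
     \<and> c_cmp E (k_fst E A' C') (kprodm E f g) = c_cmp E f (k_fst E A C)
     \<and> c_cmp E (k_snd E A' C') (kprodm E f g) = c_cmp E g (k_snd E A C)"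
proof -
  have d: "c_dom E f = A" "c_dom E g = C" using assms unfolding hom_def by auto
  show ?thesis unfolding kprodm_def d
    using kpair_prop[OF cat_cmp[OF catE fst_hom assms(1)] cat_cmp[OF catE snd_hom assms(2)]] by blast
qed

lemma Bprod_eq:
  assumes "h1 \<in> hom B X (p_ob R (k_prod E Z W))" "h2 \<in> hom B X (p_ob R (k_prod E Z W))"
    "c_cmp B (p_mor R (k_fst E Z W)) h1 = c_cmp B (p_mor R (k_fst E Z W)) h2"
    "c_cmp B (p_mor R (k_snd E Z W)) h1 = c_cmp B (p_mor R (k_snd E Z W)) h2"
  shows "h1 = h2"
proof -
  obtain g1 where g1: "g1 \<in> hom E (l_ob R X) (k_prod E Z W)" "p_mor R g1 = h1" using lift[OF assms(1)] by blast
  obtain g2 where g2: "g2 \<in> hom E (l_ob R X) (k_prod E Z W)" "p_mor R g2 = h2" using lift[OF assms(2)] by blast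
  have "c_cmp E (k_fst E Z W) g1 = c_cmp E (k_fst E Z W) g2"
    apply (rule p_faithful[OF cat_cmp[OF catE g1(1) fst_hom] cat_cmp[OF catE g2(1) fst_hom]])
    using p_cmp[OF g1(1) fst_hom] p_cmp[OF g2(1) fst_hom] g1 g2 assms(3) by simp
  moreover have "c_cmp E (k_snd E Z W) g1 = c_cmp E (k_snd E Z W) g2"
    apply (rule p_faithful[OF cat_cmp[OF catE g1(1) snd_hom] cat_cmp[OF catE g2(1) snd_hom]])
    using p_cmp[OF g1(1) snd_hom] p_cmp[OF g2(1) snd_hom] g1 g2 assms(4) by simp
  ultimately have "g1 = g2" using kpair_eq g1(1) g2(1) by blast
  then show ?thesis using g1 g2 by simp
qed

lemma bpair_p:
  assumes u: "u \<in> hom E Z W"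
  shows "bpair B E R Z W (c_id B (p_ob R Z)) (p_mor R u) = p_mor R (kpair E (c_id E Z) u)"
proof -
  have dom: "c_dom B (c_id B (p_ob R Z)) = p_ob R Z" using cat_id[OF catB] unfolding hom_def by auto
  have kp: "kpair E (c_id E Z) u \<in> hom E Z (k_prod E Z W)"
    "c_cmp E (k_fst E Z W) (kpair E (c_id E Z) u) = c_id E Z"
    "c_cmp E (k_snd E Z W) (kpair E (c_id E Z) u) = u"
    using kpair_prop[OF cat_id[OF catE] u] by auto
  let ?h = "p_mor R (kpair E (c_id E Z) u)"
  have P: "?h \<in> hom B (p_ob R Z) (p_ob R (k_prod E Z W)) \<and>
      c_cmp B (p_mor R (k_fst E Z W)) ?h = c_id B (p_ob R Z) \<and> c_cmp B (p_mor R (k_snd E Z W)) ?h = p_mor R u"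
    using p_hom[OF kp(1)] p_cmp[OF kp(1) fst_hom] p_cmp[OF kp(1) snd_hom] kp p_id by simp
  show ?thesis unfolding bpair_def dom
    apply (rule the_equality)
     apply (rule P)
    subgoal for x
      apply (rule Bprod_eq[of x "p_ob R Z" Z W ?h])
      using P by auto
    done
qed

lemma tmap_id: "t_map B T (c_id B X) = c_id B (t_ob T X)"
proof -
  have "c_cod B (c_id B X) = X" using cat_id[OF catB] unfolding hom_def by auto
  then show ?thesis unfolding t_map_def using cat_idr[OF catB eta_hom] ext_eta by simp
qed

lemma kl_nat:
  assumes k: "k \<in> hom B A (m_lolli B X (t_ob T Y))"
  shows "c_cmp B (kl B T X Y) (m_tensm B k (c_id B (t_ob T X)))
       = ddag B T A X (c_cmp B (m_ev B X (t_ob T Y)) (m_tensm B k (c_id B X)))"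
proof -
  let ?L = "m_lolli B X (t_ob T Y)"
  let ?ev = "m_ev B X (t_ob T Y)"
  let ?kx = "m_tensm B k (c_id B X)"
  have kx: "?kx \<in> hom B (m_tens B A X) (m_tens B ?L X)" using tensm_hom[OF k cat_id[OF catB]] .
  have cod: "c_cod B ?kx = m_tens B ?L X" using kx unfolding hom_def by auto
  have ek: "c_cmp B (t_eta T (m_tens B ?L X)) ?kx \<in> hom B (m_tens B A X) (t_ob T (m_tens B ?L X))"
    using cat_cmp[OF catB kx eta_hom] .
  have sn: "c_cmp B (t_str T ?L X) (m_tensm B k (c_id B (t_ob T X))) =
      c_cmp B (t_map B T ?kx) (t_str T A X)"
    using str_nat[OF k cat_id[OF catB]] tmap_id by simp
  have tm: "t_map B T ?kx = t_ext T (c_cmp B (t_eta T (m_tens B ?L X)) ?kx)"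
    unfolding t_map_def cod ..
  have eev: "c_cmp B (t_ext T ?ev) (t_map B T ?kx) = t_ext T (c_cmp B ?ev ?kx)"
    unfolding tm ext_comp[OF ek ev_hom]
    using cat_assoc[OF catB kx eta_hom ext_hom[OF ev_hom]] ext_unit[OF ev_hom] by simp
  have "c_cmp B (kl B T X Y) (m_tensm B k (c_id B (t_ob T X)))
      = c_cmp B (t_ext T ?ev) (c_cmp B (t_str T ?L X) (m_tensm B k (c_id B (t_ob T X))))"
    unfolding kl_def ddag_def
    using cat_assoc[OF catB tensm_hom[OF k cat_id[OF catB]] str_hom ext_hom[OF ev_hom]] by simp
  also have "\<dots> = c_cmp B (t_ext T ?ev) (c_cmp B (t_map B T ?kx) (t_str T A X))" using sn by simp
  also have "\<dots> = c_cmp B (c_cmp B (t_ext T ?ev) (t_map B T ?kx)) (t_str T A X)"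
    using cat_assoc[OF catB str_hom _ ext_hom[OF ev_hom]] ext_hom[OF ek] tm by simp
  also have "\<dots> = ddag B T A X (c_cmp B ?ev ?kx)" unfolding eev ddag_def ..
  finally show ?thesis .
qed


lemma prod_id:
  "c_cmp E (kprodm E (k_fst E P Q) (c_id E Q)) (kpair E (c_id E (k_prod E P Q)) (k_snd E P Q))
   = c_id E (k_prod E P Q)"
proof -
  let ?Z = "k_prod E P Q"
  note M = kprodm_prop[OF fst_hom[of P Q] cat_id[OF catE, of Q]]
  note K = kpair_prop[OF cat_id[OF catE, of ?Z] snd_hom[of P Q]]
  have m: "kprodm E (k_fst E P Q) (c_id E Q) \<in> hom E (k_prod E ?Z Q) ?Z" using M by simp
  have kp: "kpair E (c_id E ?Z) (k_snd E P Q) \<in> hom E ?Z (k_prod E ?Z Q)" using K by simp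
  have mk: "c_cmp E (kprodm E (k_fst E P Q) (c_id E Q)) (kpair E (c_id E ?Z) (k_snd E P Q)) \<in> hom E ?Z ?Z"
    using cat_cmp[OF catE kp m] .
  show ?thesis
  proof (rule kpair_eq[OF mk cat_id[OF catE]])
    show "c_cmp E (k_fst E P Q) (c_cmp E (kprodm E (k_fst E P Q) (c_id E Q)) (kpair E (c_id E ?Z) (k_snd E P Q)))
        = c_cmp E (k_fst E P Q) (c_id E ?Z)"
      using cat_assoc[OF catE kp m fst_hom] M cat_assoc[OF catE kp fst_hom fst_hom] K
        cat_idr[OF catE fst_hom[of P Q]] by simp
    show "c_cmp E (k_snd E P Q) (c_cmp E (kprodm E (k_fst E P Q) (c_id E Q)) (kpair E (c_id E ?Z) (k_snd E P Q)))
        = c_cmp E (k_snd E P Q) (c_id E ?Z)"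
      using cat_assoc[OF catE kp m snd_hom] M cat_idl[OF catE snd_hom[of ?Z Q]] K
        cat_idr[OF catE snd_hom[of P Q]] by simp
  qed
qed

lemma main: "Asign B E R T le mult = Comp B E R T le mult"
proof (rule set_eqI, rule iffI)
  fix \<Delta> assume A: "\<Delta> \<in> Asign B E R T le mult"
  then have mo: "mono_ord B E R T le \<Delta>" and
    AS: "\<And>\<alpha> \<beta> X Y. dotarr R E (kl B T X Y)
        (k_prod E (w_pitch R X (\<Delta> \<alpha> Y)) (\<Delta> \<beta> X)) (\<Delta> (mult \<beta> \<alpha>) Y)"
    unfolding Asign_def by auto
  have pD: "\<And>\<alpha> X. p_ob R (\<Delta> \<alpha> X) = t_ob T X" using mo unfolding mono_ord_def by auto
  show "\<Delta> \<in> Comp B E R T le mult"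
    unfolding Comp_def
  proof (intro CollectI conjI allI impI mo)
    fix \<alpha> \<beta> Z X Y f g
    assume fh: "f \<in> hom B (p_ob R Z) (t_ob T X)"
      and gh: "g \<in> hom B (m_tens B (p_ob R Z) X) (t_ob T Y)"
      and fd: "dotarr R E f Z (\<Delta> \<alpha> X)"
      and gd: "dotarr R E g (k_prod E Z (l_ob R X)) (\<Delta> \<beta> Y)"
    obtain f' where f': "f' \<in> hom E Z (\<Delta> \<alpha> X)" "p_mor R f' = f" using fd unfolding dotarr_def by blast
    obtain g' where g': "g' \<in> hom E (k_prod E Z (l_ob R X)) (\<Delta> \<beta> Y)" "p_mor R g' = g"
      using gd unfolding dotarr_def by blast
    obtain h where h: "h \<in> hom E Z (w_pitch R X (\<Delta> \<beta> Y))"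
      "c_cmp E (w_ev R X (\<Delta> \<beta> Y)) (kprodm E h (c_id E (l_ob R X))) = g'"
      using curry[OF g'(1)] by blast
    obtain k where k: "k \<in> hom E (k_prod E (w_pitch R X (\<Delta> \<beta> Y)) (\<Delta> \<alpha> X)) (\<Delta> (mult \<alpha> \<beta>) Y)"
      "p_mor R k = kl B T X Y"
      using AS[where \<alpha>=\<beta> and \<beta>=\<alpha> and X=X and Y=Y] unfolding dotarr_def by blast
    note hp = kprodm_prop[OF h(1) cat_id[OF catE, of "\<Delta> \<alpha> X"]]
    note K = kpair_prop[OF cat_id[OF catE, of Z] f'(1)]
    have m1: "kprodm E h (c_id E (\<Delta> \<alpha> X)) \<in> hom E (k_prod E Z (\<Delta> \<alpha> X)) (k_prod E (w_pitch R X (\<Delta> \<beta> Y)) (\<Delta> \<alpha> X))"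
      using hp by simp
    have m2: "kpair E (c_id E Z) f' \<in> hom E Z (k_prod E Z (\<Delta> \<alpha> X))" using K by simp
    let ?w = "c_cmp E k (c_cmp E (kprodm E h (c_id E (\<Delta> \<alpha> X))) (kpair E (c_id E Z) f'))"
    have w: "?w \<in> hom E Z (\<Delta> (mult \<alpha> \<beta>) Y)" using cat_cmp[OF catE cat_cmp[OF catE m2 m1] k(1)] .
    have ph: "p_mor R h \<in> hom B (p_ob R Z) (m_lolli B X (t_ob T Y))"
      using p_hom[OF h(1)] p_pitch pD by simp
    note hp2 = kprodm_prop[OF h(1) cat_id[OF catE, of "l_ob R X"]]
    have g_eq: "g = c_cmp B (m_ev B X (t_ob T Y)) (m_tensm B (p_mor R h) (c_id B X))"
    proof -
      have "g = p_mor R (c_cmp E (w_ev R X (\<Delta> \<beta> Y)) (kprodm E h (c_id E (l_ob R X))))" using h g' by simp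
      also have "\<dots> = c_cmp B (m_ev B X (t_ob T Y)) (m_tensm B (p_mor R h) (c_id B X))"
        using p_cmp[OF hp2[THEN conjunct1] wev_hom]
          p_kprodm[OF h(1) cat_id[OF catE]] p_wev pD p_id pL by simp
      finally show ?thesis .
    qed
    have bp: "bpair B E R Z (\<Delta> \<alpha> X) (c_id B (p_ob R Z)) f = p_mor R (kpair E (c_id E Z) f')"
      using bpair_p[OF f'(1)] f'(2) by simp
    have pm1: "p_mor R (kprodm E h (c_id E (\<Delta> \<alpha> X))) = m_tensm B (p_mor R h) (c_id B (t_ob T X))"
      using p_kprodm[OF h(1) cat_id[OF catE]] p_id pD by simp
    have klh: "kl B T X Y \<in> hom B (m_tens B (m_lolli B X (t_ob T Y)) (t_ob T X)) (t_ob T Y)"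
      unfolding kl_def ddag_def using cat_cmp[OF catB str_hom ext_hom[OF ev_hom]] .
    have pm1h: "m_tensm B (p_mor R h) (c_id B (t_ob T X)) \<in> hom B (m_tens B (p_ob R Z) (t_ob T X))
         (m_tens B (m_lolli B X (t_ob T Y)) (t_ob T X))"
      using tensm_hom[OF ph cat_id[OF catB]] .
    have pm2h: "p_mor R (kpair E (c_id E Z) f') \<in> hom B (p_ob R Z) (m_tens B (p_ob R Z) (t_ob T X))"
      using p_hom[OF m2] p_prod pD by simp
    have "p_mor R ?w = c_cmp B (kl B T X Y) (c_cmp B (m_tensm B (p_mor R h) (c_id B (t_ob T X))) (p_mor R (kpair E (c_id E Z) f')))"
      using p_cmp[OF cat_cmp[OF catE m2 m1] k(1)] p_cmp[OF m2 m1] k(2) pm1 by simp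
    also have "\<dots> = c_cmp B (c_cmp B (kl B T X Y) (m_tensm B (p_mor R h) (c_id B (t_ob T X)))) (p_mor R (kpair E (c_id E Z) f'))"
      using cat_assoc[OF catB pm2h pm1h klh] .
    also have "\<dots> = c_cmp B (ddag B T (p_ob R Z) X g) (bpair B E R Z (\<Delta> \<alpha> X) (c_id B (p_ob R Z)) f)"
      unfolding kl_nat[OF ph] g_eq bp ..
    finally show "dotarr R E (c_cmp B (ddag B T (p_ob R Z) X g) (bpair B E R Z (\<Delta> \<alpha> X) (c_id B (p_ob R Z)) f))
          Z (\<Delta> (mult \<alpha> \<beta>) Y)"
      unfolding dotarr_def using w by metis
  qed
next
  fix \<Delta> assume C: "\<Delta> \<in> Comp B E R T le mult"
  then have mo: "mono_ord B E R T le \<Delta>" and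
    CS: "\<And>\<alpha> \<beta> Z X Y f g.
        f \<in> hom B (p_ob R Z) (t_ob T X) \<Longrightarrow>
        g \<in> hom B (m_tens B (p_ob R Z) X) (t_ob T Y) \<Longrightarrow>
        dotarr R E f Z (\<Delta> \<alpha> X) \<Longrightarrow>
        dotarr R E g (k_prod E Z (l_ob R X)) (\<Delta> \<beta> Y) \<Longrightarrow>
        dotarr R E (c_cmp B (ddag B T (p_ob R Z) X g) (bpair B E R Z (\<Delta> \<alpha> X) (c_id B (p_ob R Z)) f))
          Z (\<Delta> (mult \<alpha> \<beta>) Y)"
    unfolding Comp_def by auto
  have pD: "\<And>\<alpha> X. p_ob R (\<Delta> \<alpha> X) = t_ob T X" using mo unfolding mono_ord_def by auto
  show "\<Delta> \<in> Asign B E R T le mult"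
    unfolding Asign_def
  proof (intro CollectI conjI allI mo)
    fix \<alpha> \<beta> X Y
    define P where "P = w_pitch R X (\<Delta> \<alpha> Y)"
    define Q where "Q = \<Delta> \<beta> X"
    define Z where "Z = k_prod E P Q"
    define g' where "g' = c_cmp E (w_ev R X (\<Delta> \<alpha> Y)) (kprodm E (k_fst E P Q) (c_id E (l_ob R X)))"
    note M = kprodm_prop[OF fst_hom[of P Q] cat_id[OF catE, of "l_ob R X"]]
    have g'h: "g' \<in> hom E (k_prod E Z (l_ob R X)) (\<Delta> \<alpha> Y)"
      unfolding g'_def Z_def using cat_cmp[OF catE M[THEN conjunct1] wev_hom[of X "\<Delta> \<alpha> Y", folded P_def]] .
    have fh: "p_mor R (k_snd E P Q) \<in> hom B (p_ob R Z) (t_ob T X)"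
      using p_hom[OF snd_hom[of P Q]] unfolding Z_def Q_def pD .
    have gh: "p_mor R g' \<in> hom B (m_tens B (p_ob R Z) X) (t_ob T Y)"
      using p_hom[OF g'h] p_prod pL pD by simp
    have fd: "dotarr R E (p_mor R (k_snd E P Q)) Z (\<Delta> \<beta> X)"
      unfolding dotarr_def Z_def Q_def using snd_hom by blast
    have gd: "dotarr R E (p_mor R g') (k_prod E Z (l_ob R X)) (\<Delta> \<alpha> Y)"
      unfolding dotarr_def using g'h by blast
    have pfst: "p_mor R (k_fst E P Q) \<in> hom B (p_ob R Z) (m_lolli B X (t_ob T Y))"
      using p_hom[OF fst_hom[of P Q]] p_pitch pD unfolding Z_def P_def by simp
    have g_eq: "p_mor R g' = c_cmp B (m_ev B X (t_ob T Y)) (m_tensm B (p_mor R (k_fst E P Q)) (c_id B X))"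
      unfolding g'_def
      using p_cmp[OF M[THEN conjunct1] wev_hom[of X "\<Delta> \<alpha> Y", folded P_def]]
          p_kprodm[OF fst_hom[of P Q] cat_id[OF catE]] p_wev pD p_id pL by simp
    have bp: "bpair B E R Z Q (c_id B (p_ob R Z)) (p_mor R (k_snd E P Q)) = p_mor R (kpair E (c_id E Z) (k_snd E P Q))"
      using bpair_p[OF snd_hom[of P Q]] unfolding Z_def .
    note K = kpair_prop[OF cat_id[OF catE, of Z] snd_hom[of P Q, folded Z_def]]
    note M2 = kprodm_prop[OF fst_hom[of P Q] cat_id[OF catE, of Q]]
    have pm1: "p_mor R (kprodm E (k_fst E P Q) (c_id E Q)) = m_tensm B (p_mor R (k_fst E P Q)) (c_id B (t_ob T X))"
      using p_kprodm[OF fst_hom[of P Q] cat_id[OF catE]] p_id pD unfolding Q_def by simp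
    have klh: "kl B T X Y \<in> hom B (p_ob R Z) (t_ob T Y)"
      unfolding kl_def ddag_def Z_def p_prod P_def Q_def p_pitch pD using cat_cmp[OF catB str_hom ext_hom[OF ev_hom]] .
    have klh2: "kl B T X Y \<in> hom B (m_tens B (m_lolli B X (t_ob T Y)) (t_ob T X)) (t_ob T Y)"
      unfolding kl_def ddag_def using cat_cmp[OF catB str_hom ext_hom[OF ev_hom]] .
    have pm1h: "m_tensm B (p_mor R (k_fst E P Q)) (c_id B (t_ob T X)) \<in> hom B (m_tens B (p_ob R Z) (t_ob T X))
         (m_tens B (m_lolli B X (t_ob T Y)) (t_ob T X))"
      using tensm_hom[OF pfst cat_id[OF catB]] .
    have pm2h: "p_mor R (kpair E (c_id E Z) (k_snd E P Q)) \<in> hom B (p_ob R Z) (m_tens B (p_ob R Z) (t_ob T X))"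
      using p_hom[OF K[THEN conjunct1]] p_prod pD unfolding Q_def by simp
    have "c_cmp B (ddag B T (p_ob R Z) X (p_mor R g')) (bpair B E R Z Q (c_id B (p_ob R Z)) (p_mor R (k_snd E P Q)))
       = c_cmp B (c_cmp B (kl B T X Y) (m_tensm B (p_mor R (k_fst E P Q)) (c_id B (t_ob T X))))
           (p_mor R (kpair E (c_id E Z) (k_snd E P Q)))"
      unfolding kl_nat[OF pfst] g_eq bp ..
    also have "\<dots> = c_cmp B (kl B T X Y) (c_cmp B (m_tensm B (p_mor R (k_fst E P Q)) (c_id B (t_ob T X)))
           (p_mor R (kpair E (c_id E Z) (k_snd E P Q))))"
      using cat_assoc[OF catB pm2h pm1h klh2] by simp
    also have "\<dots> = c_cmp B (kl B T X Y) (p_mor R (c_id E Z))"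
      using p_cmp[OF K[THEN conjunct1] M2[THEN conjunct1, folded Z_def]] pm1 prod_id[of P Q, folded Z_def] by simp
    also have "\<dots> = kl B T X Y" using p_id cat_idr[OF catB klh] by simp
    finally have eq: "c_cmp B (ddag B T (p_ob R Z) X (p_mor R g')) (bpair B E R Z Q (c_id B (p_ob R Z)) (p_mor R (k_snd E P Q)))
       = kl B T X Y" .
    show "dotarr R E (kl B T X Y) (k_prod E (w_pitch R X (\<Delta> \<alpha> Y)) (\<Delta> \<beta> X)) (\<Delta> (mult \<beta> \<alpha>) Y)"
    proof -
      have "dotarr R E (kl B T X Y) Z (\<Delta> (mult \<beta> \<alpha>) Y)"
        using CS[OF fh gh fd gd, folded Q_def] unfolding eq .
      then show ?thesis unfolding Z_def P_def Q_def .
    qed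
  qed
qed

end

theorem theorem8:
  fixes B :: "('a,'b) smcc" and E :: "('c,'d) ccat" and R :: "('a,'b,'c,'d) wref"
    and T :: "('a,'b) smonad"
    and le :: "'g \<Rightarrow> 'g \<Rightarrow> bool" and one :: 'g and mult :: "'g \<Rightarrow> 'g \<Rightarrow> 'g"
  assumes "weakly_closed_cartesian_refinement B E R"
    and "strong_monad B T"
    and "preordered_monoid le one mult"
  shows "Asign B E R T le mult = Comp B E R T le mult"
  by (rule main[OF assms(1,2)])

end
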